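(* Let $Y\subset\mathbb{R}^2$ be any set, $\varepsilon>0$, and let $\alpha,\beta:S^1\to Y$ be essential loops that are homotopic in $Y$, with $\mathrm{diam}(\mathrm{im}(\alpha))<\varepsilon$ and $\mathrm{diam}(\mathrm{im}(\beta))<\varepsilon$. Then $\mathrm{diam}(\mathrm{im}(\alpha)\cup\mathrm{im}(\beta))<2\varepsilon$.
   Context: A loop $S^1\to Y$ is essential if it is not null-homotopic in $Y$. Diameters are Euclidean. *)

theory Defs
  imports "HOL-Analysis.Analysis"
begin

text \<open>The plane R^2 is modelled as the complex numbers (Euclidean metric);
S^1 is the unit circle sphere 0 1 in the plane.\<close>

definition circle_loop :: "complex set \<Rightarrow> (complex \<Rightarrow> complex) \<Rightarrow> bool" where
  "circle_loop Y f \<longleftrightarrow> continuous_on (sphere 0 1) f \<and> f ` sphere 0 1 \<subseteq> Y"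

definition essential_loop :: "complex set \<Rightarrow> (complex \<Rightarrow> complex) \<Rightarrow> bool" where
  "essential_loop Y f \<longleftrightarrow> circle_loop Y f \<and>
     \<not> (\<exists>c. homotopic_with_canon (\<lambda>x. True) (sphere 0 1) Y f (\<lambda>x. c))"

end

theory Submission
  imports Defs
begin

lemma line_connected_convex:
  fixes J :: "complex set"
  assumes conn: "connected J" and sub: "J \<subseteq> {w. inner a w = b}" and a0: "a \<noteq> 0"
  shows "convex J"
  unfolding convex_def
proof (intro ballI allI impI)
  fix x y u v assume x: "x \<in> J" and y: "y \<in> J" and uv: "0 \<le> (u::real)" "0 \<le> v" "u + v = 1"
  define p where "p = u *\<^sub>R x + v *\<^sub>R y"
  define d where "d = \<i> * a"
  have ipx: "inner d p = u * inner d x + v * inner d y"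
    by (simp add: p_def inner_add_right)
  have mid: "min X Y \<le> u * X + v * Y \<and> u * X + v * Y \<le> max X Y" for X Y :: real
  proof -
    have "u * min X Y \<le> u * X" "v * min X Y \<le> v * Y" "u * X \<le> u * max X Y" "v * Y \<le> v * max X Y"
      using uv by (simp_all add: mult_left_mono)
    moreover have "u * min X Y + v * min X Y = min X Y" "u * max X Y + v * max X Y = max X Y"
      using uv(3) by (metis distrib_right mult_1)+
    ultimately show ?thesis by linarith
  qed
  have "\<exists>q\<in>J. inner d q = inner d p"
  proof (cases "inner d x \<le> inner d y")
    case True
    have "inner d x \<le> inner d p" "inner d p \<le> inner d y"
      using True mid[of "inner d x" "inner d y"] unfolding ipx by auto
    then show ?thesis using connected_ivt_hyperplane[OF conn x y] by blast
  next
    case False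
    have "inner d y \<le> inner d p" "inner d p \<le> inner d x"
      using False mid[of "inner d x" "inner d y"] unfolding ipx by auto
    then show ?thesis using connected_ivt_hyperplane[OF conn y x] by blast
  qed
  then obtain q where q: "q \<in> J" "inner d q = inner d p" by blast
  have ax: "inner a x = b" and ay: "inner a y = b" using sub x y by auto
  have "inner a p = u * inner a x + v * inner a y"
    by (simp add: p_def inner_add_right)
  also have "\<dots> = (u + v) * b" unfolding ax ay by (simp add: distrib_right)
  also have "\<dots> = b" using uv(3) by simp
  finally have "inner a q = inner a p" using sub q by auto
  then have e1: "Re a * Re (q - p) + Im a * Im (q - p) = 0"
    by (simp add: inner_complex_def algebra_simps)
  have e2: "- Im a * Re (q - p) + Re a * Im (q - p) = 0"
    using q(2) by (simp add: inner_complex_def d_def algebra_simps)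
  have i1: "(Re a ^ 2 + Im a ^ 2) * Re (q - p) = Re a * (Re a * Re (q - p) + Im a * Im (q - p)) - Im a * (- Im a * Re (q - p) + Re a * Im (q - p))"
    by (simp add: algebra_simps power2_eq_square)
  have i2: "(Re a ^ 2 + Im a ^ 2) * Im (q - p) = Im a * (Re a * Re (q - p) + Im a * Im (q - p)) + Re a * (- Im a * Re (q - p) + Re a * Im (q - p))"
    by (simp add: algebra_simps power2_eq_square)
  have nz: "Re a ^ 2 + Im a ^ 2 \<noteq> 0"
    using a0 by (simp add: complex_eq_iff)
  have r0: "(Re a ^ 2 + Im a ^ 2) * Re (q - p) = 0" unfolding i1 e1 e2 by simp
  have r1: "(Re a ^ 2 + Im a ^ 2) * Im (q - p) = 0" unfolding i2 e1 e2 by simp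
  have "Re (q - p) = 0" "Im (q - p) = 0"
    using r0 r1 nz by (simp_all only: mult_eq_0_iff) blast+
  then have "q - p = 0" by (simp add: complex_eq_iff)
  then show "u *\<^sub>R x + v *\<^sub>R y \<in> J" using q p_def by simp
qed

lemma key_hull_meet:
  fixes Y :: "complex set" and \<alpha> \<beta> :: "complex \<Rightarrow> complex"
  assumes ess: "essential_loop Y \<alpha>" and lb: "circle_loop Y \<beta>"
    and hom: "homotopic_with_canon (\<lambda>x. True) (sphere 0 1) Y \<alpha> \<beta>"
  shows "convex hull (\<alpha> ` sphere 0 1) \<inter> convex hull (\<beta> ` sphere 0 1) \<noteq> {}"
proof
  assume disj: "convex hull (\<alpha> ` sphere 0 1) \<inter> convex hull (\<beta> ` sphere 0 1) = {}"
  define A where "A = \<alpha> ` sphere 0 1"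
  define B where "B = \<beta> ` sphere 0 1"
  have ca: "continuous_on (sphere 0 1) \<alpha>" and cb: "continuous_on (sphere 0 1) \<beta>"
    and aY: "\<alpha> ` sphere 0 1 \<subseteq> Y"
    using ess lb unfolding essential_loop_def circle_loop_def by auto
  have notnull: "\<not> (\<exists>c. homotopic_with_canon (\<lambda>x. True) (sphere 0 1) Y \<alpha> (\<lambda>x. c))"
    using ess unfolding essential_loop_def by auto
  have s1ne: "sphere (0::complex) 1 \<noteq> {}" by (simp add: sphere_eq_empty)
  have cA: "compact A" "A \<noteq> {}" using ca s1ne unfolding A_def by (auto intro: compact_continuous_image)
  have cB: "compact B" "B \<noteq> {}" using cb s1ne unfolding B_def by (auto intro: compact_continuous_image)
  obtain a b where ha: "\<forall>x\<in>convex hull A. inner a x < b" and hb: "\<forall>x\<in>convex hull B. inner a x > b"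
    using separating_hyperplane_compact_closed[of "convex hull A" "convex hull B"] disj cA cB
    by (auto simp: A_def B_def compact_convex_hull compact_imp_closed)
  have a0: "a \<noteq> 0"
  proof
    assume "a = 0"
    obtain x where "x \<in> A" using cA by auto
    obtain y where "y \<in> B" using cB by auto
    then show False using ha hb \<open>x \<in> A\<close> \<open>a = 0\<close> hull_subset[of A convex] hull_subset[of B convex] by force
  qed
  obtain H where Hc: "continuous_on ({0..1::real} \<times> sphere 0 1) H" and HY: "H ` ({0..1} \<times> sphere 0 1) \<subseteq> Y"
    and H0: "\<And>x. H (0, x) = \<alpha> x" and H1: "\<And>x. H (1, x) = \<beta> x"
  proof -
    obtain h where "continuous_on ({0..1::real} \<times> sphere 0 1) h" "h \<in> {0..1} \<times> sphere 0 1 \<rightarrow> Y"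
      "\<forall>x. h (0, x) = \<alpha> x" "\<forall>x. h (1, x) = \<beta> x"
      using hom unfolding homotopic_with_def by auto
    then show ?thesis using that by (auto simp: image_subset_iff_funcset)
  qed
  have "\<exists>c. homotopic_with_canon (\<lambda>x. True) (sphere 0 1) (convex hull B) \<beta> (\<lambda>x. c)"
    using nullhomotopic_into_contractible[of "sphere 0 1" \<beta> "convex hull B"] cb cB
    by (auto simp: B_def convex_imp_contractible hull_subset[of _ convex, THEN subsetD])
  then obtain g where gc: "continuous_on (cball 0 1) g" and gB: "g ` cball 0 1 \<subseteq> convex hull B"
    and gs: "\<forall>x\<in>sphere 0 1. g x = \<beta> x"
    unfolding nullhomotopic_from_sphere_extension by blast
  define t where "t = (\<lambda>z::complex. min 1 (max 0 (2 - norm z)))"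
  define \<Phi> where "\<Phi> = (\<lambda>z. if norm z \<le> 1 then g z else H (t z, z / complex_of_real (norm z)))"
  have tc: "continuous_on UNIV t" unfolding t_def by (intro continuous_intros)
  have inner_map: "continuous_on {z. 1 \<le> norm z} (\<lambda>z. (t z, z / complex_of_real (norm z)))"
    unfolding t_def by (intro continuous_intros) auto
  have inner_into: "(\<lambda>z. (t z, z / complex_of_real (norm z))) ` {z. 1 \<le> norm z} \<subseteq> {0..1} \<times> sphere 0 1"
    by (auto simp: t_def norm_divide)
  have c2: "continuous_on {z. 1 \<le> norm z} (\<lambda>z. H (t z, z / complex_of_real (norm z)))"
    using continuous_on_compose2[OF Hc inner_map inner_into] .
  have \<Phi>c: "continuous_on UNIV \<Phi>"
  proof -
    have "continuous_on (cball 0 1 \<union> {z. 1 \<le> norm z}) \<Phi>"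
      unfolding \<Phi>_def
    proof (rule continuous_on_cases)
      show "closed {z::complex. 1 \<le> norm z}" by (simp add: closed_Collect_le continuous_on_norm_id)
      show "\<forall>x. x \<in> cball 0 1 \<and> \<not> norm x \<le> 1 \<or> x \<in> {z. 1 \<le> norm z} \<and> norm x \<le> 1 \<longrightarrow>
               g x = H (t x, x / complex_of_real (norm x))"
        using gs H1 by (auto simp: t_def)
    qed (use gc c2 in auto)
    moreover have "cball 0 1 \<union> {z. 1 \<le> norm z} = (UNIV :: complex set)" by auto
    ultimately show ?thesis by simp
  qed
  have F1: "inner a (\<Phi> z) > b" if "norm z \<le> 1" for z
  proof -
    have "g z \<in> convex hull B" using that gB by auto
    then show ?thesis using that hb by (auto simp: \<Phi>_def)
  qed
  have F2: "\<Phi> z \<in> Y" if "norm z > 1" for z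
  proof -
    have "(t z, z / complex_of_real (norm z)) \<in> {0..1} \<times> sphere 0 1"
      using that by (auto simp: t_def norm_divide)
    then show ?thesis using that HY by (auto simp: \<Phi>_def)
  qed
  have F3: "\<Phi> z = \<alpha> (z / complex_of_real (norm z))" if "norm z \<ge> 2" for z
    using that H0 by (auto simp: \<Phi>_def t_def)
  have F3': "inner a (\<Phi> z) < b" if "norm z \<ge> 2" for z
  proof -
    have "z / complex_of_real (norm z) \<in> sphere 0 1" using that by (auto simp: norm_divide)
    then have "\<Phi> z \<in> A" using F3[OF that] by (auto simp: A_def)
    then show ?thesis using ha hull_subset[of A convex] by auto
  qed
  define P where "P = {z. inner a (\<Phi> z) < b}"
  have Po: "open P" unfolding P_def
    by (rule open_Collect_less) (intro continuous_intros \<Phi>c continuous_on_compose2[OF continuous_on_inner[OF continuous_on_const continuous_on_id] \<Phi>c], auto)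
  have Pc: "closed {z. inner a (\<Phi> z) \<le> b}"
    by (rule closed_Collect_le) (intro continuous_intros \<Phi>c continuous_on_compose2[OF continuous_on_inner[OF continuous_on_const continuous_on_id] \<Phi>c], auto)
  define Q where "Q = connected_component_set P 2"
  have EP: "- ball 0 2 \<subseteq> P" using F3' by (auto simp: P_def)
  have Econn: "connected (- ball (0::complex) 2)"
    by (rule connected_complement_bounded_convex) auto
  have EQ: "- ball 0 2 \<subseteq> Q" unfolding Q_def
    by (rule connected_component_maximal[OF _ Econn EP]) auto
  have Qo: "open Q" unfolding Q_def using Po by (simp add: open_connected_component)
  have QP: "Q \<subseteq> P" unfolding Q_def by (rule connected_component_subset)
  have Qconn: "connected Q" unfolding Q_def by (rule connected_connected_component)
  have cbQ: "cball 0 1 \<subseteq> - Q" using QP F1 by (force simp: P_def)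
  define V where "V = connected_component_set (- Q) 0"
  have cbV: "cball 0 1 \<subseteq> V" unfolding V_def
    by (rule connected_component_maximal[OF _ connected_cball cbQ]) auto
  have VQ: "V \<subseteq> - Q" unfolding V_def by (rule connected_component_subset)
  have Vc: "closed V" unfolding V_def using Qo by (simp add: closed_Compl closed_connected_component)
  have z0Q: "(0::complex) \<in> - Q"
    using cbQ centre_in_cball[of "0::complex" 1] by (meson subsetD zero_le_one)
  have Vcomp: "V \<in> components (- Q)" unfolding V_def using z0Q by (rule componentsI)
  have fVconn: "connected (frontier V)"
    by (rule connected_frontier_component_complement[OF Qconn Vcomp])
  have fVQ: "frontier V \<subseteq> frontier Q"
    using frontier_of_components_subset[OF Vcomp] by (simp add: frontier_complement)
  have fQP: "frontier Q \<subseteq> frontier P" unfolding Q_def by (rule frontier_of_connected_component_subset)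
  have fP: "frontier P \<subseteq> {z. inner a (\<Phi> z) = b}"
  proof -
    have "closure P \<subseteq> {z. inner a (\<Phi> z) \<le> b}"
      by (rule closure_minimal) (use Pc in \<open>auto simp: P_def\<close>)
    then show ?thesis using Po by (auto simp: frontier_def interior_open P_def)
  qed
  have fV1: "frontier V \<subseteq> {z. 1 < norm z \<and> inner a (\<Phi> z) = b}"
  proof
    fix z assume z: "z \<in> frontier V"
    then have zb: "inner a (\<Phi> z) = b" using fVQ fQP fP by auto
    have "1 < norm z" using F1[of z] zb by (cases "norm z \<le> 1") auto
    then show "z \<in> {z. 1 < norm z \<and> inner a (\<Phi> z) = b}" using zb by auto
  qed
  define J where "J = \<Phi> ` frontier V"
  have JY: "J \<subseteq> Y" using fV1 F2 by (auto simp: J_def)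
  have Jconn: "connected J" unfolding J_def
    by (rule connected_continuous_image[OF continuous_on_subset[OF \<Phi>c] fVconn]) auto
  have Jconv: "convex J"
    by (rule line_connected_convex[OF Jconn _ a0, of b]) (use fV1 in \<open>auto simp: J_def\<close>)
  have Vne: "V \<noteq> {}" using cbV by auto
  have VU: "V \<noteq> UNIV"
  proof
    assume "V = UNIV"
    then have "(2::complex) \<in> - Q" using VQ by auto
    moreover have "(2::complex) \<in> Q" using EQ by auto
    ultimately show False by auto
  qed
  have Jne: "J \<noteq> {}" using frontier_not_empty[OF Vne VU] by (auto simp: J_def)
  obtain e where ec: "continuous_on UNIV e" and eJ: "e ` UNIV \<subseteq> J"
    and ee: "\<And>x. x \<in> frontier V \<Longrightarrow> e x = \<Phi> x"
    using Dugundji[OF Jconv Jne, of UNIV "frontier V" \<Phi>] continuous_on_subset[OF \<Phi>c]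
    by (auto simp: J_def frontier_closed)
  define G where "G = (\<lambda>z. if z \<notin> V then \<Phi> z else e z)"
  have Gc: "continuous_on UNIV G"
  proof -
    have "continuous_on (closure (- V) \<union> V) G"
      unfolding G_def
    proof (rule continuous_on_cases)
      show "\<forall>x. x \<in> closure (- V) \<and> \<not> x \<notin> V \<or> x \<in> V \<and> x \<notin> V \<longrightarrow> \<Phi> x = e x"
      proof (intro allI impI)
        fix x assume "x \<in> closure (- V) \<and> \<not> x \<notin> V \<or> x \<in> V \<and> x \<notin> V"
        then have "x \<in> frontier V" using Vc
          by (auto simp: frontier_def closure_complement closure_closed)
        then show "\<Phi> x = e x" using ee by auto
      qed
    qed (use Vc \<Phi>c ec in \<open>auto intro: continuous_on_subset\<close>)
    moreover have "closure (- V) \<union> V = UNIV" using closure_subset[of "- V"] by auto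
    ultimately show ?thesis by simp
  qed
  have GY: "G z \<in> Y" for z
  proof (cases "z \<in> V")
    case True then show ?thesis using eJ JY by (auto simp: G_def)
  next
    case False
    then have "1 < norm z" using cbV by (auto simp: subset_iff not_less[symmetric])
    then show ?thesis using False F2 by (auto simp: G_def)
  qed
  have "\<exists>c. homotopic_with_canon (\<lambda>x. True) (sphere 0 1) Y \<alpha> (\<lambda>x. c)"
    unfolding nullhomotopic_from_sphere_extension
  proof (intro exI conjI)
    show "continuous_on (cball 0 1) (\<lambda>z. G (2 * z))"
      by (rule continuous_on_compose2[OF Gc]) (auto intro: continuous_intros)
    show "(\<lambda>z. G (2 * z)) ` cball 0 1 \<subseteq> Y" using GY by auto
    show "\<forall>x\<in>sphere 0 1. G (2 * x) = \<alpha> x"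
    proof
      fix x :: complex assume x: "x \<in> sphere 0 1"
      then have n2: "norm (2 * x) = 2" by (simp add: norm_mult)
      then have "2 * x \<in> - ball 0 2" by simp
      then have "2 * x \<notin> V" using EQ VQ by blast
      then have "G (2 * x) = \<Phi> (2 * x)" by (simp add: G_def)
      also have "\<dots> = \<alpha> ((2 * x) / complex_of_real (norm (2 * x)))" using F3 n2 by simp
      also have "\<dots> = \<alpha> x" using n2 by simp
      finally show "G (2 * x) = \<alpha> x" .
    qed
  qed
  then show False using notnull by blast
qed

lemma dist_hull_le:
  fixes A :: "complex set"
  assumes "bounded A" "x \<in> A" "p \<in> convex hull A"
  shows "dist x p \<le> diameter A"
proof -
  have "A \<subseteq> cball x (diameter A)"
    using diameter_bounded_bound[OF assms(1) assms(2)] by (auto simp: subset_iff)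
  then have "convex hull A \<subseteq> cball x (diameter A)"
    by (rule hull_minimal) (rule convex_cball)
  then show ?thesis using assms(3) by auto
qed

theorem mainTheorem12:
  fixes Y :: "complex set" and \<epsilon> :: real and \<alpha> \<beta> :: "complex \<Rightarrow> complex"
  assumes "\<epsilon> > 0"
    and "essential_loop Y \<alpha>" and "essential_loop Y \<beta>"
    and "homotopic_with_canon (\<lambda>x. True) (sphere 0 1) Y \<alpha> \<beta>"
    and "diameter (\<alpha> ` sphere 0 1) < \<epsilon>"
    and "diameter (\<beta> ` sphere 0 1) < \<epsilon>"
  shows "diameter (\<alpha> ` sphere 0 1 \<union> \<beta> ` sphere 0 1) < 2 * \<epsilon>"
proof -
  define A where "A = \<alpha> ` sphere 0 1"
  define B where "B = \<beta> ` sphere 0 1"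
  have lb: "circle_loop Y \<beta>" using assms(3) by (simp add: essential_loop_def)
  obtain p where pA: "p \<in> convex hull A" and pB: "p \<in> convex hull B"
    using key_hull_meet[OF assms(2) lb assms(4)] unfolding A_def B_def by blast
  have ca: "continuous_on (sphere 0 1) \<alpha>" and cb: "continuous_on (sphere 0 1) \<beta>"
    using assms(2,3) unfolding essential_loop_def circle_loop_def by auto
  have s1ne: "sphere (0::complex) 1 \<noteq> {}" by (simp add: sphere_eq_empty)
  have cA: "compact A" "A \<noteq> {}" using ca s1ne unfolding A_def by (auto intro: compact_continuous_image)
  have cB: "compact B" "B \<noteq> {}" using cb s1ne unfolding B_def by (auto intro: compact_continuous_image)
  have bA: "bounded A" and bB: "bounded B" using cA cB compact_imp_bounded by auto
  have dA: "diameter A < \<epsilon>" and dB: "diameter B < \<epsilon>" using assms(5,6) A_def B_def by auto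
  have cAB: "compact (A \<union> B)" "A \<union> B \<noteq> {}" using cA cB by auto
  obtain x y where xy: "x \<in> A \<union> B" "y \<in> A \<union> B" "dist x y = diameter (A \<union> B)"
    using diameter_compact_attained[OF cAB] by blast
  have "dist x y < 2 * \<epsilon>"
  proof -
    have dxA: "dist u v \<le> diameter A" if "u \<in> A" "v \<in> A" for u v
      using diameter_bounded_bound[OF bA that] .
    have dxB: "dist u v \<le> diameter B" if "u \<in> B" "v \<in> B" for u v
      using diameter_bounded_bound[OF bB that] .
    have cross: "dist u v < 2 * \<epsilon>" if "u \<in> A" "v \<in> B" for u v
    proof -
      have "dist u v \<le> dist u p + dist p v" by (rule dist_triangle)
      also have "\<dots> \<le> diameter A + diameter B"
        using dist_hull_le[OF bA that(1) pA] dist_hull_le[OF bB that(2) pB]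
        by (simp add: dist_commute)
      finally show ?thesis using dA dB by linarith
    qed
    show ?thesis
      using xy(1,2) dxA[of x y] dxB[of x y] cross[of x y] cross[of y x] dA dB assms(1)
      by (auto simp: dist_commute)
  qed
  then show ?thesis using xy(3) A_def B_def by simp
qed

end
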